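(* Let $(X,d,\ll,\le,\tau)$ be a Lorentzian length space such that the metric space $(X,d)$ is locally compact. If $(X,d,\ll,\le,\tau)$ is stably causal, then it is strongly causal.
   Context: A causal space $(X,\ll,\le)$ is a set $X$ with two transitive relations $\ll,\le$ such that $\le$ is reflexive and $x\ll y\Rightarrow x\le y$; write $p<q$ if $p\le q$ and $p\neq q$. Set $I^+(x)=\{y: x\ll y\}$, $I^-(x)=\{y: y\ll x\}$, $J^+(x)=\{y:x\le y\}$, $J^-(x)=\{y:y\le x\}$. A Lorentzian pre-length space $(X,d,\ll,\le,\tau)$ is a causal space together with a metric $d$ on $X$ and a function $\tau:X\times X\to[0,\infty]$ that is lower semicontinuous with respect to the topology of $d$, satisfies $\tau(x,z)\ge\tau(x,y)+\tau(y,z)$ whenever $x\le y\le z$, $\tau(x,y)=0$ if $x\not\le y$, and $\tau(x,y)>0\iff x\ll y$. All topological notions refer to the metric topology of $d$. A future directed causal (resp. timelike) curve is a non-constant Lipschitz map $\gamma:I\to X$ ($I\subset\mathbb R$ an interval) with $\gamma(s)\le\gamma(t)$ (resp. $\gamma(s)\ll\gamma(t)$) for all $s<t$. For a future directed causal $\gamma:[a,b]\to X$, $L_\tau(\gamma)=\inf\sum_{i=0}^{N-1}\tau(\gamma(t_i),\gamma(t_{i+1}))$ over all partitions $a=t_0<\dots<t_N=b$. The space is causally path connected if whenever $x\le y$ (resp. $x\ll y$) there is a future directed causal (resp. timelike) curve from $x$ to $y$. For open $U\subset X$, $p\le_U q$ means there is a future directed causal curve from $p$ to $q$ with image in $U$.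 A neighborhood $U$ is causally closed if whenever $p_n\le_U q_n$ with $p_n\to p\in U$, $q_n\to q\in U$, then $p\le_U q$; the space is locally causally closed if every point has a causally closed neighborhood. The space is localizable if every $x$ has a neighborhood $\Omega_x$ such that: (i) all causal curves contained in $\Omega_x$ have uniformly bounded $d$-length; (ii) there is a continuous $\omega_x:\Omega_x\times\Omega_x\to[0,\infty)$ such that $(\Omega_x,d|_{\Omega_x\times\Omega_x},\ll|_{\Omega_x},\le|_{\Omega_x},\omega_x)$ is a Lorentzian pre-length space, and $I^\pm(y)\cap\Omega_x\ne\emptyset$ for every $y\in\Omega_x$; (iii) for all $p,q\in\Omega_x$ with $p<q$ there is a future causal curve $\gamma_{p,q}$ from $p$ to $q$ with $L_\tau(\gamma_{p,q})\ge L_\tau(\gamma)$ for every future causal curve $\gamma\subset\Omega_x$ from $p$ to $q$, and $L_\tau(\gamma_{p,q})=\omega_x(p,q)$. A Lorentzian length space is a causally path connected, locally causally closed, localizable Lorentzian pre-length space with $\tau(x,y)=\sup\{L_\tau(\gamma):\gamma$ a future causal curve from $x$ to $y\}$. Causality notions: $K^+\subset X\times X$ is the smallest relation that is transitive, closed in $X\times X$, and contains $J^+=\{(x,y):x\le y\}$; stably causal means $K^+$ is antisymmetric. The Alexandrov topology is the topology on $X$ with subbase $\{I^+(x)\cap I^-(y): x,y\in X\}$; strongly causal means the Alexandrov topology coincides with the metric topology of $d$. *)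

theory Defs
  imports "HOL-Analysis.Analysis"
begin

text \<open>The metric space (X,d) is the type 'a of class
metric_space (X = UNIV, d = dist).\<close>

definition causal_space_on :: "'a set \<Rightarrow> ('a \<Rightarrow> 'a \<Rightarrow> bool) \<Rightarrow> ('a \<Rightarrow> 'a \<Rightarrow> bool) \<Rightarrow> bool" where
  "causal_space_on S ll le \<longleftrightarrow>
     (\<forall>x\<in>S. \<forall>y\<in>S. \<forall>z\<in>S. ll x y \<longrightarrow> ll y z \<longrightarrow> ll x z) \<and>
     (\<forall>x\<in>S. \<forall>y\<in>S. \<forall>z\<in>S. le x y \<longrightarrow> le y z \<longrightarrow> le x z) \<and>
     (\<forall>x\<in>S. le x x) \<and>
     (\<forall>x\<in>S. \<forall>y\<in>S. ll x y \<longrightarrow> le x y)"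

definition lsc_on :: "'b::topological_space set \<Rightarrow> ('b \<Rightarrow> ennreal) \<Rightarrow> bool" where
  "lsc_on S f \<longleftrightarrow> (\<forall>z\<in>S. \<forall>c. c < f z \<longrightarrow> (\<forall>\<^sub>F w in nhds z. w \<in> S \<longrightarrow> c < f w))"

definition lpls_on :: "'a::metric_space set \<Rightarrow> ('a \<Rightarrow> 'a \<Rightarrow> bool) \<Rightarrow> ('a \<Rightarrow> 'a \<Rightarrow> bool)
    \<Rightarrow> ('a \<Rightarrow> 'a \<Rightarrow> ennreal) \<Rightarrow> bool" where
  "lpls_on S ll le tau \<longleftrightarrow>
     causal_space_on S ll le \<and>
     lsc_on (S \<times> S) (\<lambda>(x, y). tau x y) \<and>
     (\<forall>x\<in>S. \<forall>y\<in>S. \<forall>z\<in>S. le x y \<longrightarrow> le y z \<longrightarrow> tau x y + tau y z \<le> tau x z) \<and>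
     (\<forall>x\<in>S. \<forall>y\<in>S. \<not> le x y \<longrightarrow> tau x y = 0) \<and>
     (\<forall>x\<in>S. \<forall>y\<in>S. 0 < tau x y \<longleftrightarrow> ll x y)"

definition lip_curve :: "(real \<Rightarrow> 'a::metric_space) \<Rightarrow> real set \<Rightarrow> bool" where
  "lip_curve \<gamma> I \<longleftrightarrow> is_interval I \<and> (\<exists>s\<in>I. \<exists>t\<in>I. \<gamma> s \<noteq> \<gamma> t) \<and> (\<exists>C. lipschitz_on C I \<gamma>)"

definition fd_causal :: "('a \<Rightarrow> 'a \<Rightarrow> bool) \<Rightarrow> (real \<Rightarrow> 'a::metric_space) \<Rightarrow> real set \<Rightarrow> bool" where
  "fd_causal le \<gamma> I \<longleftrightarrow> lip_curve \<gamma> I \<and> (\<forall>s\<in>I. \<forall>t\<in>I. s < t \<longrightarrow> le (\<gamma> s) (\<gamma> t))"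

definition fd_timelike :: "('a \<Rightarrow> 'a \<Rightarrow> bool) \<Rightarrow> (real \<Rightarrow> 'a::metric_space) \<Rightarrow> real set \<Rightarrow> bool" where
  "fd_timelike ll \<gamma> I \<longleftrightarrow> lip_curve \<gamma> I \<and> (\<forall>s\<in>I. \<forall>t\<in>I. s < t \<longrightarrow> ll (\<gamma> s) (\<gamma> t))"

definition causal_from_to :: "('a \<Rightarrow> 'a \<Rightarrow> bool) \<Rightarrow> (real \<Rightarrow> 'a::metric_space) \<Rightarrow> real \<Rightarrow> real \<Rightarrow> 'a \<Rightarrow> 'a \<Rightarrow> bool" where
  "causal_from_to le \<gamma> a b x y \<longleftrightarrow> a < b \<and> fd_causal le \<gamma> {a..b} \<and> \<gamma> a = x \<and> \<gamma> b = y"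

definition timelike_from_to :: "('a \<Rightarrow> 'a \<Rightarrow> bool) \<Rightarrow> (real \<Rightarrow> 'a::metric_space) \<Rightarrow> real \<Rightarrow> real \<Rightarrow> 'a \<Rightarrow> 'a \<Rightarrow> bool" where
  "timelike_from_to ll \<gamma> a b x y \<longleftrightarrow> a < b \<and> fd_timelike ll \<gamma> {a..b} \<and> \<gamma> a = x \<and> \<gamma> b = y"

definition is_partition :: "real \<Rightarrow> real \<Rightarrow> (nat \<Rightarrow> real) \<Rightarrow> nat \<Rightarrow> bool" where
  "is_partition a b t N \<longleftrightarrow> 0 < N \<and> t 0 = a \<and> t N = b \<and> (\<forall>i<N. t i < t (Suc i))"

definition L_tau :: "('a \<Rightarrow> 'a \<Rightarrow> ennreal) \<Rightarrow> (real \<Rightarrow> 'a) \<Rightarrow> real \<Rightarrow> real \<Rightarrow> ennreal" where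
  "L_tau tau \<gamma> a b = (INF p \<in> {(t, N). is_partition a b t N}.
      (\<Sum>i<snd p. tau (\<gamma> (fst p i)) (\<gamma> (fst p (Suc i)))))"

definition d_length :: "(real \<Rightarrow> 'a::metric_space) \<Rightarrow> real set \<Rightarrow> ennreal" where
  "d_length \<gamma> I = (SUP p \<in> {(t, N). (\<forall>i\<le>N. t i \<in> I) \<and> (\<forall>i<N. t i < t (Suc i))}.
      ennreal (\<Sum>i<snd p. dist (\<gamma> (fst p i)) (\<gamma> (fst p (Suc i)))))"

definition causally_path_connected :: "('a \<Rightarrow> 'a \<Rightarrow> bool) \<Rightarrow> ('a::metric_space \<Rightarrow> 'a \<Rightarrow> bool) \<Rightarrow> bool" where
  "causally_path_connected ll le \<longleftrightarrow>
     (\<forall>x y. le x y \<and> x \<noteq> y \<longrightarrow> (\<exists>\<gamma> a b. causal_from_to le \<gamma> a b x y)) \<and>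
     (\<forall>x y. ll x y \<longrightarrow> (\<exists>\<gamma> a b. timelike_from_to ll \<gamma> a b x y))"

definition le_in :: "('a \<Rightarrow> 'a \<Rightarrow> bool) \<Rightarrow> 'a::metric_space set \<Rightarrow> 'a \<Rightarrow> 'a \<Rightarrow> bool" where
  "le_in le U p q \<longleftrightarrow> p = q \<or> (\<exists>\<gamma> a b. causal_from_to le \<gamma> a b p q \<and> \<gamma> ` {a..b} \<subseteq> U)"

definition causally_closed :: "('a \<Rightarrow> 'a \<Rightarrow> bool) \<Rightarrow> 'a::metric_space set \<Rightarrow> bool" where
  "causally_closed le U \<longleftrightarrow> open U \<and>
     (\<forall>pn qn p q. (\<forall>n. le_in le U (pn n) (qn n)) \<and> pn \<longlonglongrightarrow> p \<and> qn \<longlonglongrightarrow> q \<and> p \<in> U \<and> q \<in> U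
        \<longrightarrow> le_in le U p q)"

definition locally_causally_closed :: "('a::metric_space \<Rightarrow> 'a \<Rightarrow> bool) \<Rightarrow> bool" where
  "locally_causally_closed le \<longleftrightarrow> (\<forall>x. \<exists>U. x \<in> U \<and> causally_closed le U)"

definition is_nbhd :: "'a::topological_space set \<Rightarrow> 'a \<Rightarrow> bool" where
  "is_nbhd N x \<longleftrightarrow> (\<exists>U. open U \<and> x \<in> U \<and> U \<subseteq> N)"

definition localizable :: "('a \<Rightarrow> 'a \<Rightarrow> bool) \<Rightarrow> ('a \<Rightarrow> 'a \<Rightarrow> bool) \<Rightarrow> ('a::metric_space \<Rightarrow> 'a \<Rightarrow> ennreal) \<Rightarrow> bool" where
  "localizable ll le tau \<longleftrightarrow> (\<forall>x. \<exists>\<Omega> (\<omega> :: 'a \<Rightarrow> 'a \<Rightarrow> real).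
     is_nbhd \<Omega> x \<and>
     (\<exists>C::real. \<forall>\<gamma> I. fd_causal le \<gamma> I \<and> \<gamma> ` I \<subseteq> \<Omega> \<longrightarrow> d_length \<gamma> I \<le> ennreal C) \<and>
     continuous_on (\<Omega> \<times> \<Omega>) (\<lambda>(p, q). \<omega> p q) \<and>
     (\<forall>p\<in>\<Omega>. \<forall>q\<in>\<Omega>. 0 \<le> \<omega> p q) \<and>
     lpls_on \<Omega> ll le (\<lambda>p q. ennreal (\<omega> p q)) \<and>
     (\<forall>y\<in>\<Omega>. (\<exists>z\<in>\<Omega>. ll y z) \<and> (\<exists>z\<in>\<Omega>. ll z y)) \<and>
     (\<forall>p\<in>\<Omega>. \<forall>q\<in>\<Omega>. le p q \<and> p \<noteq> q \<longrightarrow>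
        (\<exists>\<gamma> a b. causal_from_to le \<gamma> a b p q \<and> L_tau tau \<gamma> a b = ennreal (\<omega> p q) \<and>
           (\<forall>\<gamma>' a' b'. causal_from_to le \<gamma>' a' b' p q \<and> \<gamma>' ` {a'..b'} \<subseteq> \<Omega> \<longrightarrow>
              L_tau tau \<gamma>' a' b' \<le> L_tau tau \<gamma> a b))))"

definition lorentzian_length_space :: "('a \<Rightarrow> 'a \<Rightarrow> bool) \<Rightarrow> ('a \<Rightarrow> 'a \<Rightarrow> bool) \<Rightarrow> ('a::metric_space \<Rightarrow> 'a \<Rightarrow> ennreal) \<Rightarrow> bool" where
  "lorentzian_length_space ll le tau \<longleftrightarrow>
     lpls_on UNIV ll le tau \<and> causally_path_connected ll le \<and> locally_causally_closed le \<and>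
     localizable ll le tau \<and>
     (\<forall>x y. tau x y = (SUP c \<in> {(\<gamma>, a, b). causal_from_to le \<gamma> a b x y}.
                          L_tau tau (fst c) (fst (snd c)) (snd (snd c))))"

definition Kplus :: "('a::topological_space \<Rightarrow> 'a \<Rightarrow> bool) \<Rightarrow> ('a \<times> 'a) set" where
  "Kplus le = \<Inter> {R. trans R \<and> closed R \<and> {(x, y). le x y} \<subseteq> R}"

definition stably_causal :: "('a::topological_space \<Rightarrow> 'a \<Rightarrow> bool) \<Rightarrow> bool" where
  "stably_causal le \<longleftrightarrow> antisym (Kplus le)"

definition alexandrov_topology :: "('a \<Rightarrow> 'a \<Rightarrow> bool) \<Rightarrow> 'a topology" where
  "alexandrov_topology ll = topology_generated_by {{y. ll x y} \<inter> {y. ll y z} | x z. True}"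

definition strongly_causal :: "('a::topological_space \<Rightarrow> 'a \<Rightarrow> bool) \<Rightarrow> bool" where
  "strongly_causal ll \<longleftrightarrow> alexandrov_topology ll = euclidean"

end

theory Submission
  imports Defs
begin

lemma curve_near_start:
  fixes \<gamma> :: "real \<Rightarrow> 'a::metric_space"
  assumes "a < b" "lip_curve \<gamma> {a..b}" "0 < \<delta>"
  shows "\<exists>t. a < t \<and> t \<le> b \<and> dist (\<gamma> t) (\<gamma> a) < \<delta>"
proof -
  obtain C where L: "lipschitz_on C {a..b} \<gamma>" using assms(2) unfolding lip_curve_def by blast
  have C0: "0 \<le> C" using L by (rule lipschitz_on_nonneg)
  define t where "t = a + min (b - a) (\<delta> / (C + 1))"
  have t1: "a < t" using assms C0 by (simp add: t_def)
  have t2: "t \<le> b" by (simp add: t_def)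
  have "dist (\<gamma> t) (\<gamma> a) \<le> C * dist t a"
    using L t1 t2 assms(1) by (intro lipschitz_onD) auto
  also have "dist t a = min (b - a) (\<delta> / (C + 1))" using t1 by (simp add: t_def dist_real_def)
  also have "C * min (b - a) (\<delta> / (C + 1)) \<le> C * (\<delta> / (C + 1))"
    using C0 by (intro mult_left_mono) auto
  also have "C * (\<delta> / (C + 1)) < \<delta>"
    using C0 assms(3) by (simp add: field_simps)
  finally show ?thesis using t1 t2 by blast
qed

lemma curve_near_end:
  fixes \<gamma> :: "real \<Rightarrow> 'a::metric_space"
  assumes "a < b" "lip_curve \<gamma> {a..b}" "0 < \<delta>"
  shows "\<exists>t. a \<le> t \<and> t < b \<and> dist (\<gamma> t) (\<gamma> b) < \<delta>"
proof -
  obtain C where L: "lipschitz_on C {a..b} \<gamma>" using assms(2) unfolding lip_curve_def by blast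
  have C0: "0 \<le> C" using L by (rule lipschitz_on_nonneg)
  define t where "t = b - min (b - a) (\<delta> / (C + 1))"
  have t1: "t < b" using assms C0 by (simp add: t_def)
  have t2: "a \<le> t" by (simp add: t_def)
  have "dist (\<gamma> t) (\<gamma> b) \<le> C * dist t b"
    using L t1 t2 assms(1) by (intro lipschitz_onD) auto
  also have "dist t b = min (b - a) (\<delta> / (C + 1))" using t1 by (simp add: t_def dist_real_def)
  also have "C * min (b - a) (\<delta> / (C + 1)) \<le> C * (\<delta> / (C + 1))"
    using C0 by (intro mult_left_mono) auto
  also have "C * (\<delta> / (C + 1)) < \<delta>"
    using C0 assms(3) by (simp add: field_simps)
  finally show ?thesis using t1 t2 by blast
qed

lemma exit_point:
  fixes x p y q :: "'a::metric_space"
  assumes cs: "causal_space_on UNIV ll le" and cpc: "causally_path_connected ll le"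
    and lpy: "ll p y" and lyq: "ll y q" and dp: "dist x p < \<epsilon>" and dy: "\<epsilon> \<le> dist x y"
  shows "\<exists>r. dist x r = \<epsilon> \<and> le p r \<and> le r q"
proof -
  obtain \<gamma> a b where g: "timelike_from_to ll \<gamma> a b p y"
    using cpc lpy unfolding causally_path_connected_def by blast
  have ab: "a < b" and tl: "fd_timelike ll \<gamma> {a..b}" and ga: "\<gamma> a = p" and gb: "\<gamma> b = y"
    using g unfolding timelike_from_to_def by auto
  have lc: "lip_curve \<gamma> {a..b}" and tt: "\<And>s t. s \<in> {a..b} \<Longrightarrow> t \<in> {a..b} \<Longrightarrow> s < t \<Longrightarrow> ll (\<gamma> s) (\<gamma> t)"
    using tl unfolding fd_timelike_def by auto
  obtain C where L: "lipschitz_on C {a..b} \<gamma>" using lc unfolding lip_curve_def by blast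
  have cont: "continuous_on {a..b} (\<lambda>t. dist x (\<gamma> t))"
    by (intro continuous_intros lipschitz_on_continuous_on[OF L])
  obtain t where t: "a \<le> t" "t \<le> b" "dist x (\<gamma> t) = \<epsilon>"
    using IVT'[of "\<lambda>t. dist x (\<gamma> t)" a \<epsilon> b] cont ab dp dy ga gb by (auto simp: dist_commute)
  have "t \<noteq> a" using t dp ga by auto
  hence at: "a < t" using t by auto
  have llle: "\<And>u v. ll u v \<Longrightarrow> le u v" and tr: "\<And>u v w. le u v \<Longrightarrow> le v w \<Longrightarrow> le u w"
    and rf: "\<And>u. le u u"
    using cs unfolding causal_space_on_def by blast+
  have 1: "le p (\<gamma> t)" using tt[of a t] at t ga llle by auto
  have 2: "le (\<gamma> t) y"
  proof (cases "t < b")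
    case True thus ?thesis using tt[of t b] t gb llle by auto
  next
    case False thus ?thesis using t gb rf by auto
  qed
  have "le (\<gamma> t) q" using tr[OF 2 llle[OF lyq]] .
  thus ?thesis using 1 t by blast
qed

lemma timelike_open:
  fixes ll :: "'a::metric_space \<Rightarrow> 'a \<Rightarrow> bool"
  assumes "lpls_on UNIV ll le tau"
  shows "open {y. ll x y}" "open {y. ll y x}"
proof -
  let ?f = "\<lambda>(x, y). tau x y"
  have lsc: "lsc_on (UNIV \<times> UNIV) ?f" and pos: "\<And>x y. 0 < tau x y \<longleftrightarrow> ll x y"
    using assms unfolding lpls_on_def by auto
  have op: "open {w. 0 < ?f w}"
    unfolding open_subopen[of "{w. 0 < ?f w}"]
  proof
    fix z assume "z \<in> {w. 0 < ?f w}"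
    hence z0: "0 < ?f z" by simp
    have "\<forall>\<^sub>F w in nhds z. w \<in> UNIV \<times> UNIV \<longrightarrow> 0 < ?f w"
      by (rule lsc[unfolded lsc_on_def, rule_format, OF _ z0]) simp
    then obtain S where "open S" "z \<in> S" "\<forall>w\<in>S. 0 < ?f w"
      unfolding eventually_nhds by auto
    thus "\<exists>T. open T \<and> z \<in> T \<and> T \<subseteq> {w. 0 < ?f w}" by blast
  qed
  have "{y. ll x y} = (\<lambda>y. (x, y)) -` {w. 0 < ?f w}" using pos by auto
  moreover have "open ((\<lambda>y. (x, y)) -` {w. 0 < ?f w})"
    by (intro continuous_open_vimage op) (auto intro: continuous_intros)
  ultimately show "open {y. ll x y}" by simp
  have "{y. ll y x} = (\<lambda>y. (y, x)) -` {w. 0 < ?f w}" using pos by auto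
  moreover have "open ((\<lambda>y. (y, x)) -` {w. 0 < ?f w})"
    by (intro continuous_open_vimage op) (auto intro: continuous_intros)
  ultimately show "open {y. ll y x}" by simp
qed

lemma small_diamond:
  fixes x :: "'a::metric_space"
  assumes cs: "causal_space_on UNIV ll le" and cpc: "causally_path_connected ll le"
    and approx: "\<And>x \<delta>. 0 < \<delta> \<Longrightarrow> (\<exists>q. ll x q \<and> dist q x < \<delta>) \<and> (\<exists>p. ll p x \<and> dist p x < \<delta>)"
    and Kc: "closed K" and Ka: "antisym K" and Kle: "\<And>u v. le u v \<Longrightarrow> (u, v) \<in> K"
    and e: "0 < \<epsilon>" and cpt: "compact (sphere x \<epsilon>)"
  shows "\<exists>p q. ll p x \<and> ll x q \<and> (\<forall>y. ll p y \<and> ll y q \<longrightarrow> dist x y < \<epsilon>)"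
proof (rule ccontr)
  assume H: "\<not> ?thesis"
  have "\<forall>n. \<exists>p q r. dist p x < inverse (real (Suc n)) \<and> dist q x < inverse (real (Suc n))
           \<and> dist x r = \<epsilon> \<and> le p r \<and> le r q"
  proof
    fix n
    define \<delta> where "\<delta> = min \<epsilon> (inverse (real (Suc n)))"
    have d0: "0 < \<delta>" using e by (simp add: \<delta>_def)
    obtain p where p: "ll p x" "dist p x < \<delta>" using approx[OF d0] by blast
    obtain q where q: "ll x q" "dist q x < \<delta>" using approx[OF d0] by blast
    obtain y where y: "ll p y" "ll y q" "\<not> dist x y < \<epsilon>" using H p q by blast
    have "dist x p < \<epsilon>" using p by (simp add: \<delta>_def dist_commute)
    then obtain r where "dist x r = \<epsilon>" "le p r" "le r q"
      using exit_point[OF cs cpc y(1) y(2), of x \<epsilon>] y(3) by auto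
    thus "\<exists>p q r. dist p x < inverse (real (Suc n)) \<and> dist q x < inverse (real (Suc n))
           \<and> dist x r = \<epsilon> \<and> le p r \<and> le r q"
      using p q by (intro exI[of _ p] exI[of _ q] exI[of _ r]) (auto simp: \<delta>_def)
  qed
  then obtain P where "\<forall>n. \<exists>q r. dist (P n) x < inverse (real (Suc n)) \<and> dist q x < inverse (real (Suc n))
           \<and> dist x r = \<epsilon> \<and> le (P n) r \<and> le r q" by (rule choice[THEN exE])
  then obtain Q where "\<forall>n. \<exists>r. dist (P n) x < inverse (real (Suc n)) \<and> dist (Q n) x < inverse (real (Suc n))
           \<and> dist x r = \<epsilon> \<and> le (P n) r \<and> le r (Q n)" by (rule choice[THEN exE])
  then obtain R where PQR: "\<And>n. dist (P n) x < inverse (real (Suc n)) \<and> dist (Q n) x < inverse (real (Suc n))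
           \<and> dist x (R n) = \<epsilon> \<and> le (P n) (R n) \<and> le (R n) (Q n)" by (metis choice)
  have Rs: "\<forall>n. R n \<in> sphere x \<epsilon>" using PQR by simp
  obtain l \<sigma> where l: "l \<in> sphere x \<epsilon>" "strict_mono \<sigma>" "(R \<circ> \<sigma>) \<longlonglongrightarrow> l"
    using seq_compactE[OF compact_imp_seq_compact[OF cpt] Rs] by blast
  have inv0: "(\<lambda>n. inverse (real (Suc n))) \<longlonglongrightarrow> 0" by (rule LIMSEQ_inverse_real_of_nat)
  have bP: "\<forall>n. dist (P n) x \<le> inverse (real (Suc n))" using PQR less_imp_le by blast
  have e1P: "\<forall>\<^sub>F n in sequentially. 0 \<le> dist (P n) x" by (intro always_eventually) simp
  have e2P: "\<forall>\<^sub>F n in sequentially. dist (P n) x \<le> inverse (real (Suc n))"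
    by (intro always_eventually) (use bP in blast)
  have "(\<lambda>n. dist (P n) x) \<longlonglongrightarrow> 0"
    by (rule tendsto_sandwich[OF e1P e2P tendsto_const inv0])
  hence Px: "P \<longlonglongrightarrow> x" by (rule iffD2[OF tendsto_dist_iff])
  have bQ: "\<forall>n. dist (Q n) x \<le> inverse (real (Suc n))" using PQR less_imp_le by blast
  have e1Q: "\<forall>\<^sub>F n in sequentially. 0 \<le> dist (Q n) x" by (intro always_eventually) simp
  have e2Q: "\<forall>\<^sub>F n in sequentially. dist (Q n) x \<le> inverse (real (Suc n))"
    by (intro always_eventually) (use bQ in blast)
  have "(\<lambda>n. dist (Q n) x) \<longlonglongrightarrow> 0"
    by (rule tendsto_sandwich[OF e1Q e2Q tendsto_const inv0])
  hence Qx: "Q \<longlonglongrightarrow> x" by (rule iffD2[OF tendsto_dist_iff])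
  have P\<sigma>: "(P \<circ> \<sigma>) \<longlonglongrightarrow> x" by (rule LIMSEQ_subseq_LIMSEQ[OF Px l(2)])
  have Q\<sigma>: "(Q \<circ> \<sigma>) \<longlonglongrightarrow> x" by (rule LIMSEQ_subseq_LIMSEQ[OF Qx l(2)])
  have t1: "(\<lambda>n. ((P \<circ> \<sigma>) n, (R \<circ> \<sigma>) n)) \<longlonglongrightarrow> (x, l)" by (intro tendsto_Pair P\<sigma> l(3))
  have m1: "\<And>n. ((P \<circ> \<sigma>) n, (R \<circ> \<sigma>) n) \<in> K" using PQR Kle by simp
  have 1: "(x, l) \<in> K" by (rule closed_sequentially[OF Kc m1 t1])
  have t2: "(\<lambda>n. ((R \<circ> \<sigma>) n, (Q \<circ> \<sigma>) n)) \<longlonglongrightarrow> (l, x)" by (intro tendsto_Pair Q\<sigma> l(3))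
  have m2: "\<And>n. ((R \<circ> \<sigma>) n, (Q \<circ> \<sigma>) n) \<in> K" using PQR Kle by simp
  have 2: "(l, x) \<in> K" by (rule closed_sequentially[OF Kc m2 t2])
  have "x = l" using antisymD[OF Ka 1 2] .
  thus False using l(1) e by simp
qed

theorem proposition3p15:
  fixes ll le :: "'a::metric_space \<Rightarrow> 'a \<Rightarrow> bool" and tau :: "'a \<Rightarrow> 'a \<Rightarrow> ennreal"
  assumes "lorentzian_length_space ll le tau"
    and "locally_compact_space (euclidean :: 'a topology)"
    and "stably_causal le"
  shows "strongly_causal ll"
proof -
  have lp: "lpls_on UNIV ll le tau" and cpc: "causally_path_connected ll le"
    and loc: "localizable ll le tau"
    using assms(1) unfolding lorentzian_length_space_def by auto
  have cs: "causal_space_on UNIV ll le" using lp unfolding lpls_on_def by auto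
  have approx: "(\<exists>q. ll x q \<and> dist q x < \<delta>) \<and> (\<exists>p. ll p x \<and> dist p x < \<delta>)"
    if d: "0 < \<delta>" for x :: 'a and \<delta> :: real
  proof -
    obtain \<Omega> :: "'a set" where nb: "is_nbhd \<Omega> x"
      and tl: "\<forall>y\<in>\<Omega>. (\<exists>z\<in>\<Omega>. ll y z) \<and> (\<exists>z\<in>\<Omega>. ll z y)"
      using loc unfolding localizable_def by meson
    have "x \<in> \<Omega>" using nb unfolding is_nbhd_def by blast
    then obtain z w where z: "ll x z" and w: "ll w x" using tl by blast
    obtain \<gamma> a b where g: "timelike_from_to ll \<gamma> a b x z"
      using cpc z unfolding causally_path_connected_def by blast
    hence ab: "a < b" and lc: "lip_curve \<gamma> {a..b}" and ga: "\<gamma> a = x"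
      and tt: "\<And>s t. s \<in> {a..b} \<Longrightarrow> t \<in> {a..b} \<Longrightarrow> s < t \<Longrightarrow> ll (\<gamma> s) (\<gamma> t)"
      unfolding timelike_from_to_def fd_timelike_def by auto
    obtain t where t: "a < t" "t \<le> b" "dist (\<gamma> t) (\<gamma> a) < \<delta>"
      using curve_near_start[OF ab lc d] by blast
    have q: "ll x (\<gamma> t) \<and> dist (\<gamma> t) x < \<delta>" using tt[of a t] t ab ga by auto
    obtain \<gamma>' a' b' where g': "timelike_from_to ll \<gamma>' a' b' w x"
      using cpc w unfolding causally_path_connected_def by blast
    hence ab': "a' < b'" and lc': "lip_curve \<gamma>' {a'..b'}" and gb': "\<gamma>' b' = x"
      and tt': "\<And>s t. s \<in> {a'..b'} \<Longrightarrow> t \<in> {a'..b'} \<Longrightarrow> s < t \<Longrightarrow> ll (\<gamma>' s) (\<gamma>' t)"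
      unfolding timelike_from_to_def fd_timelike_def by auto
    obtain t' where t': "a' \<le> t'" "t' < b'" "dist (\<gamma>' t') (\<gamma>' b') < \<delta>"
      using curve_near_end[OF ab' lc' d] by blast
    have p: "ll (\<gamma>' t') x \<and> dist (\<gamma>' t') x < \<delta>" using tt'[of t' b'] t' ab' gb' by auto
    show ?thesis using p q by blast
  qed
  define K where "K = Kplus le"
  have Kc: "closed K" unfolding K_def Kplus_def by (rule closed_Inter) auto
  have Ka: "antisym K" using assms(3) unfolding K_def stably_causal_def by simp
  have Kle: "(u, v) \<in> K" if "le u v" for u v using that unfolding K_def Kplus_def by auto
  define B where "B = {{y. ll x y} \<inter> {y. ll y z} | x z. True}"
  have "generate_topology_on B S \<longleftrightarrow> open S" for S
  proof
    assume "generate_topology_on B S"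
    thus "open S"
    proof (induction rule: generate_topology_on.induct)
      case (Basis s)
      then obtain x z where "s = {y. ll x y} \<inter> {y. ll y z}" unfolding B_def by blast
      thus ?case using timelike_open[OF lp] by auto
    qed auto
  next
    assume oS: "open S"
    have "S = \<Union>{V \<in> B. V \<subseteq> S}"
    proof
      show "S \<subseteq> \<Union>{V \<in> B. V \<subseteq> S}"
      proof
        fix x assume xS: "x \<in> S"
        obtain e2 where e2: "0 < e2" "ball x e2 \<subseteq> S" using oS xS open_contains_ball by blast
        obtain U C where UC: "open U" "compact C" "x \<in> U" "U \<subseteq> C"
        proof -
          have "\<exists>U K. openin euclidean U \<and> compactin euclidean K \<and> x \<in> U \<and> U \<subseteq> K"
            using assms(2) unfolding locally_compact_space_def by simp
          thus thesis using that by auto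
        qed
        obtain e1 where e1: "0 < e1" "cball x e1 \<subseteq> U" using UC open_contains_cball by blast
        define \<epsilon> where "\<epsilon> = min e1 e2"
        have e0: "0 < \<epsilon>" using e1 e2 by (simp add: \<epsilon>_def)
        have "sphere x \<epsilon> \<subseteq> C" using e1 UC unfolding \<epsilon>_def by fastforce
        hence "C \<inter> sphere x \<epsilon> = sphere x \<epsilon>" by blast
        have "sphere x \<epsilon> = cball x \<epsilon> - ball x \<epsilon>" by auto
        hence csph: "closed (sphere x \<epsilon>)" by (simp add: closed_Diff)
        with \<open>C \<inter> sphere x \<epsilon> = sphere x \<epsilon>\<close> have cpt: "compact (sphere x \<epsilon>)" using compact_Int_closed[OF UC(2) csph] by simp
        obtain p q where pq: "ll p x" "ll x q" "\<forall>y. ll p y \<and> ll y q \<longrightarrow> dist x y < \<epsilon>"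
          using small_diamond[OF cs cpc approx Kc Ka Kle e0 cpt] by blast
        define V where "V = {y. ll p y} \<inter> {y. ll y q}"
        have "V \<in> B" unfolding V_def B_def by blast
        moreover have "x \<in> V" using pq unfolding V_def by simp
        moreover have "V \<subseteq> S"
        proof
          fix y assume "y \<in> V"
          hence "dist x y < e2" using pq unfolding V_def \<epsilon>_def by auto
          thus "y \<in> S" using e2 by auto
        qed
        ultimately show "x \<in> \<Union>{V \<in> B. V \<subseteq> S}" by blast
      qed
    qed blast
    moreover have "generate_topology_on B (\<Union>{V \<in> B. V \<subseteq> S})"
      by (rule generate_topology_on.UN) (auto intro: generate_topology_on.Basis)
    ultimately show "generate_topology_on B S" by simp
  qed
  thus ?thesis
    unfolding strongly_causal_def alexandrov_topology_def topology_eq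
      openin_topology_generated_by_iff B_def[symmetric]
    by simp
qed

end
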